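(* Let $R$ be an $n^2\times n^2$ solution of the QYBE satisfying the Hecke condition $(PR-q)(PR+q^{-1})=0$, and regard $\Omega_q(R)$ as a superalgebra with $x_i$ even and $\mathrm dx_i$ odd. Let $\alpha,\beta,\gamma,\delta$ satisfy the relations of $GL_q^\Omega(1|1)$ and form, in the graded tensor product of $GL_q^\Omega(1|1)$ with $\Omega_q(R)$ (odd elements from different factors anticommuting, all other pairs commuting), $x_i'=\alpha x_i+\beta\,\mathrm dx_i$, $\mathrm dx_i'=\gamma x_i+\delta\,\mathrm dx_i$ for $i=1,\dots,n$. Then the $x_i',\mathrm dx_i'$ satisfy the same relations as the generators of $\Omega_q(R)$.
   Context: $P$ is the permutation matrix; repeated indices summed. $\Omega_q(R)$ is generated by $x_1,\dots,x_n,\mathrm dx_1,\dots,\mathrm dx_n$ with relations $x_ix_j=q^{-1}x_bx_aR^a{}_i{}^b{}_j$, $\mathrm dx_i\,x_j=q\,x_b\,\mathrm dx_aR^a{}_i{}^b{}_j$, $\mathrm dx_i\,\mathrm dx_j=-q\,\mathrm dx_b\,\mathrm dx_aR^a{}_i{}^b{}_j$. $GL_q^\Omega(1|1)$ is the super-Hopf algebra generated by $\alpha,\delta$ even and invertible and $\beta,\gamma$ odd with relations $\beta\alpha=\alpha\beta$, $\gamma\alpha=q^2\alpha\gamma$, $\delta\beta=\beta\delta$, $\delta\gamma=q^{-2}\gamma\delta$, $\gamma\beta=-q^2\beta\gamma$, $\delta\alpha-\alpha\delta=(1-q^2)\beta\gamma$, $\beta^2=\gamma^2=0$, with matrix super-coproduct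 on $\begin{pmatrix}\alpha&\beta\\\gamma&\delta\end{pmatrix}$. *)

theory Defs
  imports Main
begin

definition mmul :: "('i::finite \<Rightarrow> 'i \<Rightarrow> 'k::comm_ring_1) \<Rightarrow> ('i \<Rightarrow> 'i \<Rightarrow> 'k) \<Rightarrow> 'i \<Rightarrow> 'i \<Rightarrow> 'k" where
  "mmul M N x z = (\<Sum>y\<in>UNIV. M x y * N y z)"

definition idm :: "'i \<Rightarrow> 'i \<Rightarrow> 'k::comm_ring_1" where
  "idm x y = (if x = y then 1 else 0)"

text \<open>An R-matrix is given by its components R a i b j = R^a_i^b_j; as an n^2 x n^2
  matrix its entry in row (a,b) and column (i,j) is R^a_i^b_j.\<close>

definition Rmat :: "('n \<Rightarrow> 'n \<Rightarrow> 'n \<Rightarrow> 'n \<Rightarrow> 'k) \<Rightarrow> ('n \<times> 'n) \<Rightarrow> ('n \<times> 'n) \<Rightarrow> 'k" where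
  "Rmat R = (\<lambda>(a, b) (i, j). R a i b j)"

definition Pmat :: "('n \<times> 'n) \<Rightarrow> ('n \<times> 'n) \<Rightarrow> 'k::comm_ring_1" where
  "Pmat = (\<lambda>(a, b) (i, j). if a = j \<and> b = i then 1 else 0)"

definition R12 :: "('n \<Rightarrow> 'n \<Rightarrow> 'n \<Rightarrow> 'n \<Rightarrow> 'k::comm_ring_1) \<Rightarrow> ('n \<times> 'n \<times> 'n) \<Rightarrow> ('n \<times> 'n \<times> 'n) \<Rightarrow> 'k" where
  "R12 R = (\<lambda>(a, b, c) (i, j, k). R a i b j * idm c k)"

definition R13 :: "('n \<Rightarrow> 'n \<Rightarrow> 'n \<Rightarrow> 'n \<Rightarrow> 'k::comm_ring_1) \<Rightarrow> ('n \<times> 'n \<times> 'n) \<Rightarrow> ('n \<times> 'n \<times> 'n) \<Rightarrow> 'k" where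
  "R13 R = (\<lambda>(a, b, c) (i, j, k). R a i c k * idm b j)"

definition R23 :: "('n \<Rightarrow> 'n \<Rightarrow> 'n \<Rightarrow> 'n \<Rightarrow> 'k::comm_ring_1) \<Rightarrow> ('n \<times> 'n \<times> 'n) \<Rightarrow> ('n \<times> 'n \<times> 'n) \<Rightarrow> 'k" where
  "R23 R = (\<lambda>(a, b, c) (i, j, k). idm a i * R b j c k)"

definition QYBE :: "('n::finite \<Rightarrow> 'n \<Rightarrow> 'n \<Rightarrow> 'n \<Rightarrow> 'k::comm_ring_1) \<Rightarrow> bool" where
  "QYBE R \<longleftrightarrow> mmul (mmul (R12 R) (R13 R)) (R23 R) = mmul (mmul (R23 R) (R13 R)) (R12 R)"

definition hecke :: "'k::field \<Rightarrow> ('n::finite \<Rightarrow> 'n \<Rightarrow> 'n \<Rightarrow> 'n \<Rightarrow> 'k) \<Rightarrow> bool" where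
  "hecke q R \<longleftrightarrow>
     mmul (\<lambda>x y. mmul Pmat (Rmat R) x y - q * idm x y)
          (\<lambda>x y. mmul Pmat (Rmat R) x y + inverse q * idm x y) = (\<lambda>x y. 0)"

text \<open>A scalar embedding: a unital ring homomorphism from the ground field into the
  centre of the algebra 'S (i.e. 'S is an associative unital 'k-algebra).\<close>
definition central_scalars :: "('k::field \<Rightarrow> 'S::ring_1) \<Rightarrow> bool" where
  "central_scalars emb \<longleftrightarrow>
     (\<forall>a b. emb (a + b) = emb a + emb b) \<and> (\<forall>a b. emb (a * b) = emb a * emb b) \<and>
     emb 1 = 1 \<and> (\<forall>c s. emb c * s = s * emb c)"

definition omega_rels :: "('k::field \<Rightarrow> 'S::ring_1) \<Rightarrow> 'k \<Rightarrow> ('n::finite \<Rightarrow> 'n \<Rightarrow> 'n \<Rightarrow> 'n \<Rightarrow> 'k)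
      \<Rightarrow> ('n \<Rightarrow> 'S) \<Rightarrow> ('n \<Rightarrow> 'S) \<Rightarrow> bool" where
  "omega_rels emb q R x dx \<longleftrightarrow>
     (\<forall>i j. x i * x j = (\<Sum>a\<in>UNIV. \<Sum>b\<in>UNIV. emb (inverse q * R a i b j) * (x b * x a))) \<and>
     (\<forall>i j. dx i * x j = (\<Sum>a\<in>UNIV. \<Sum>b\<in>UNIV. emb (q * R a i b j) * (x b * dx a))) \<and>
     (\<forall>i j. dx i * dx j = (\<Sum>a\<in>UNIV. \<Sum>b\<in>UNIV. emb (- q * R a i b j) * (dx b * dx a)))"

definition gl11_rels :: "('k::field \<Rightarrow> 'S::ring_1) \<Rightarrow> 'k \<Rightarrow> 'S \<Rightarrow> 'S \<Rightarrow> 'S \<Rightarrow> 'S \<Rightarrow> bool" where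
  "gl11_rels emb q \<alpha> \<beta> \<gamma> \<delta> \<longleftrightarrow>
     (\<exists>\<alpha>'. \<alpha> * \<alpha>' = 1 \<and> \<alpha>' * \<alpha> = 1) \<and> (\<exists>\<delta>'. \<delta> * \<delta>' = 1 \<and> \<delta>' * \<delta> = 1) \<and>
     \<beta> * \<alpha> = \<alpha> * \<beta> \<and> \<gamma> * \<alpha> = emb (q ^ 2) * (\<alpha> * \<gamma>) \<and>
     \<delta> * \<beta> = \<beta> * \<delta> \<and> \<delta> * \<gamma> = emb (inverse (q ^ 2)) * (\<gamma> * \<delta>) \<and>
     \<gamma> * \<beta> = - (emb (q ^ 2) * (\<beta> * \<gamma>)) \<and>
     \<delta> * \<alpha> - \<alpha> * \<delta> = emb (1 - q ^ 2) * (\<beta> * \<gamma>) \<and>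
     \<beta> * \<beta> = 0 \<and> \<gamma> * \<gamma> = 0"

text \<open>Commutation rules of the graded tensor product GL_q^Omega(1|1) \<otimes> Omega_q(R):
  alpha, delta, x i even; beta, gamma, dx i odd; odd elements from different factors
  anticommute, all other pairs from different factors commute.\<close>
definition graded_cross_rels :: "'S::ring_1 \<Rightarrow> 'S \<Rightarrow> 'S \<Rightarrow> 'S \<Rightarrow> ('n \<Rightarrow> 'S) \<Rightarrow> ('n \<Rightarrow> 'S) \<Rightarrow> bool" where
  "graded_cross_rels \<alpha> \<beta> \<gamma> \<delta> x dx \<longleftrightarrow>
     (\<forall>i. \<alpha> * x i = x i * \<alpha> \<and> \<alpha> * dx i = dx i * \<alpha> \<and>
          \<delta> * x i = x i * \<delta> \<and> \<delta> * dx i = dx i * \<delta> \<and>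
          \<beta> * x i = x i * \<beta> \<and> \<gamma> * x i = x i * \<gamma> \<and>
          \<beta> * dx i = - (dx i * \<beta>) \<and> \<gamma> * dx i = - (dx i * \<gamma>))"

end

theory Submission imports Defs begin

definition Sop :: "('k::field \<Rightarrow> 'S::ring_1) \<Rightarrow> ('n::finite \<Rightarrow> 'n \<Rightarrow> 'n \<Rightarrow> 'n \<Rightarrow> 'k) \<Rightarrow> ('n \<Rightarrow> 'n \<Rightarrow> 'S) \<Rightarrow> 'n \<Rightarrow> 'n \<Rightarrow> 'S" where
  "Sop emb R T i j = (\<Sum>a\<in>UNIV. \<Sum>b\<in>UNIV. emb (R a i b j) * T b a)"

lemma sum4: "(\<Sum>a\<in>(UNIV::'n::finite set). \<Sum>b\<in>(UNIV::'n set). \<Sum>c\<in>(UNIV::'n set). \<Sum>d\<in>(UNIV::'n set). (f a b c d::'s::comm_monoid_add))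
  = (\<Sum>c\<in>UNIV. \<Sum>d\<in>UNIV. \<Sum>b\<in>UNIV. \<Sum>a\<in>UNIV. f a b c d)"
proof -
  have "(\<Sum>a\<in>(UNIV::'n set). \<Sum>b\<in>(UNIV::'n set). \<Sum>c\<in>(UNIV::'n set). \<Sum>d\<in>(UNIV::'n set). f a b c d)
     = (\<Sum>a\<in>UNIV. \<Sum>c\<in>UNIV. \<Sum>b\<in>UNIV. \<Sum>d\<in>UNIV. f a b c d)"
    by (rule sum.cong[OF refl], rule sum.swap)
  also have "\<dots> = (\<Sum>c\<in>UNIV. \<Sum>a\<in>UNIV. \<Sum>b\<in>UNIV. \<Sum>d\<in>UNIV. f a b c d)"
    by (rule sum.swap)
  also have "\<dots> = (\<Sum>c\<in>UNIV. \<Sum>a\<in>UNIV. \<Sum>d\<in>UNIV. \<Sum>b\<in>UNIV. f a b c d)"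
    by (rule sum.cong[OF refl], rule sum.cong[OF refl], rule sum.swap)
  also have "\<dots> = (\<Sum>c\<in>UNIV. \<Sum>d\<in>UNIV. \<Sum>a\<in>UNIV. \<Sum>b\<in>UNIV. f a b c d)"
    by (rule sum.cong[OF refl], rule sum.swap)
  also have "\<dots> = (\<Sum>c\<in>UNIV. \<Sum>d\<in>UNIV. \<Sum>b\<in>UNIV. \<Sum>a\<in>UNIV. f a b c d)"
    by (rule sum.cong[OF refl], rule sum.cong[OF refl], rule sum.swap)
  finally show ?thesis .
qed

context
  fixes emb :: "'k::field \<Rightarrow> 'S::ring_1"
  assumes cs: "central_scalars emb"
begin

lemma emb_add: "emb (a + b) = emb a + emb b" using cs unfolding central_scalars_def by blast
lemma emb_mult: "emb (a * b) = emb a * emb b" using cs unfolding central_scalars_def by blast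
lemma emb_one: "emb 1 = 1" using cs unfolding central_scalars_def by blast
lemma emb_comm: "emb c * s = s * emb c" using cs unfolding central_scalars_def by blast
lemma emb_zero: "emb 0 = 0"
proof -
  have "emb (0 + 0) = emb 0 + emb 0" by (rule emb_add)
  then show ?thesis by simp
qed
lemma emb_uminus: "emb (- a) = - emb a"
proof -
  have "emb (a + - a) = emb a + emb (- a)" by (rule emb_add)
  then show ?thesis by (simp add: emb_zero add_eq_0_iff2)
qed
lemma emb_diff: "emb (a - b) = emb a - emb b"
  using emb_add[of a "- b"] emb_uminus[of b] by simp
lemma emb_sum: "emb (sum f A) = (\<Sum>x\<in>A. emb (f x))"
  by (induction A rule: infinite_finite_induct) (auto simp: emb_zero emb_add)
lemma emb_left: "s * (emb c * t) = emb c * (s * t)"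
  by (metis emb_comm mult.assoc)
lemma emb_emb: "emb a * (emb b * t) = emb (a * b) * t"
  by (simp add: emb_mult mult.assoc)

lemma Sop_add: "Sop emb R (\<lambda>u v. f u v + g u v) i j = Sop emb R f i j + Sop emb R g i j"
  unfolding Sop_def by (simp add: distrib_left sum.distrib)
lemma Sop_diff: "Sop emb R (\<lambda>u v. f u v - g u v) i j = Sop emb R f i j - Sop emb R g i j"
  unfolding Sop_def by (simp add: right_diff_distrib sum_subtractf)
lemma Sop_minus: "Sop emb R (\<lambda>u v. - f u v) i j = - Sop emb R f i j"
  unfolding Sop_def by (simp add: sum_negf)
lemma Sop_lmul: "Sop emb R (\<lambda>u v. c * f u v) i j = c * Sop emb R f i j"
  unfolding Sop_def by (simp add: sum_distrib_left emb_left)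
lemma Sop_omega: "(\<Sum>a\<in>UNIV. \<Sum>b\<in>UNIV. emb (c * R a i b j) * T b a) = emb c * Sop emb R T i j"
  unfolding Sop_def by (simp add: sum_distrib_left emb_mult mult.assoc)

end

lemma PR: "mmul Pmat (Rmat R) (a, b) (i, j) = R b i a j"
proof -
  have "mmul Pmat (Rmat R) (a, b) (i, j) = (\<Sum>w\<in>UNIV. if w = (b, a) then R b i a j else 0)"
    unfolding mmul_def by (rule sum.cong) (auto simp: Pmat_def Rmat_def split: if_splits)
  then show ?thesis by simp
qed

lemma sum_idm_r: "(\<Sum>y\<in>(UNIV::'i::finite set). f y * idm y z) = (f z :: 'k::comm_ring_1)"
proof -
  have "(\<Sum>y\<in>(UNIV::'i set). f y * idm y z) = (\<Sum>y\<in>UNIV. if y = z then f z else 0)"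
    by (rule sum.cong) (auto simp: idm_def)
  then show ?thesis by simp
qed
lemma sum_idm_l: "(\<Sum>y\<in>(UNIV::'i::finite set). idm x y * f y) = (f x :: 'k::comm_ring_1)"
proof -
  have "(\<Sum>y\<in>(UNIV::'i set). idm x y * f y) = (\<Sum>y\<in>UNIV. if y = x then f x else 0)"
    by (rule sum.cong) (auto simp: idm_def)
  then show ?thesis by simp
qed

lemma hecke_comp:
  fixes R :: "'n::finite \<Rightarrow> 'n \<Rightarrow> 'n \<Rightarrow> 'n \<Rightarrow> 'k::field"
  assumes h: "hecke q R" and q0: "q \<noteq> 0"
  shows "(\<Sum>c\<in>UNIV. \<Sum>d\<in>UNIV. R b c a d * R d i c j) = (q - inverse q) * R b i a j + (if a = i \<and> b = j then 1 else 0)"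
proof -
  let ?M = "mmul Pmat (Rmat R) :: ('n\<times>'n) \<Rightarrow> _"
  have "mmul (\<lambda>x y. ?M x y - q * idm x y) (\<lambda>x y. ?M x y + inverse q * idm x y) (a,b) (i,j) = 0"
    using h unfolding hecke_def by simp
  moreover have "\<And>y. (?M (a,b) y - q * idm (a,b) y) * (?M y (i,j) + inverse q * idm y (i,j))
     = ?M (a,b) y * ?M y (i,j) + inverse q * (?M (a,b) y * idm y (i,j)) - q * (idm (a,b) y * ?M y (i,j))
       - q * inverse q * (idm (a,b) y * idm y (i,j))"
    by (simp add: algebra_simps)
  ultimately have "(\<Sum>y\<in>UNIV. ?M (a,b) y * ?M y (i,j)) + inverse q * ?M (a,b) (i,j) - q * ?M (a,b) (i,j)
      - q * inverse q * idm (a,b) (i,j) = 0"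
    unfolding mmul_def
    by (simp only: sum.distrib sum_subtractf flip: sum_distrib_left) (simp only: sum_idm_r sum_idm_l)
  moreover have "(\<Sum>y\<in>UNIV. ?M (a,b) y * ?M y (i,j)) = (\<Sum>c\<in>UNIV. \<Sum>d\<in>UNIV. R b c a d * R d i c j)"
    by (simp add: UNIV_Times_UNIV[symmetric] sum.cartesian_product del: UNIV_Times_UNIV) (rule sum.cong, auto simp: PR)
  ultimately have "(\<Sum>c\<in>UNIV. \<Sum>d\<in>UNIV. R b c a d * R d i c j) + inverse q * R b i a j - q * R b i a j
      - q * inverse q * idm (a,b) (i,j) = 0" by (simp only: PR)
  moreover have "q * inverse q = 1" using q0 by simp
  moreover have "idm (a,b) (i,j) = (if a = i \<and> b = j then 1 else (0::'k))" by (simp add: idm_def)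
  ultimately show ?thesis by algebra
qed
lemma Sop_Sop:
  fixes emb :: "'k::field \<Rightarrow> 'S::ring_1"
  assumes cs: "central_scalars emb" and h: "hecke q R" and q0: "q \<noteq> 0"
  shows "Sop emb R (Sop emb R T) i j = emb (q - inverse q) * Sop emb R T i j + T i j"
proof -
  have "Sop emb R (Sop emb R T) i j = (\<Sum>a\<in>UNIV. \<Sum>b\<in>UNIV. \<Sum>c\<in>UNIV. \<Sum>d\<in>UNIV. emb (R c b d a * R a i b j) * T d c)"
    unfolding Sop_def by (simp add: sum_distrib_left emb_emb[OF cs] mult.commute)
  also have "\<dots> = (\<Sum>c\<in>UNIV. \<Sum>d\<in>UNIV. \<Sum>b\<in>UNIV. \<Sum>a\<in>UNIV. emb (R c b d a * R a i b j) * T d c)"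
    by (rule sum4)
  also have "\<dots> = (\<Sum>c\<in>UNIV. \<Sum>d\<in>UNIV. emb (\<Sum>b\<in>UNIV. \<Sum>a\<in>UNIV. R c b d a * R a i b j) * T d c)"
    by (simp add: emb_sum[OF cs] sum_distrib_right)
  also have "\<dots> = (\<Sum>c\<in>UNIV. \<Sum>d\<in>UNIV. emb ((q - inverse q) * R c i d j + (if d = i \<and> c = j then 1 else 0)) * T d c)"
    by (simp add: hecke_comp[OF h q0])
  also have "\<dots> = (\<Sum>c\<in>UNIV. \<Sum>d\<in>UNIV. emb (q - inverse q) * (emb (R c i d j) * T d c) + (if d = i \<and> c = j then T d c else 0))"
    by (rule sum.cong[OF refl], rule sum.cong[OF refl])
       (auto simp: emb_add[OF cs] emb_mult[OF cs] emb_one[OF cs] emb_zero[OF cs] distrib_right mult.assoc)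
  also have "\<dots> = emb (q - inverse q) * Sop emb R T i j + T i j"
  proof -
    have i1: "\<And>c. (\<Sum>d\<in>UNIV. if d = i \<and> c = j then T d c else 0) = (if c = j then T i c else 0)"
      by auto
    have ifs: "(\<Sum>c\<in>UNIV. \<Sum>d\<in>UNIV. if d = i \<and> c = j then T d c else 0) = T i j"
      by (simp only: i1) simp
    show ?thesis by (simp only: sum.distrib ifs) (simp add: sum_distrib_left Sop_def)
  qed
  finally show ?thesis .
qed


theorem mainTheorem10:
  fixes q :: "'k::field"
    and R :: "'n::finite \<Rightarrow> 'n \<Rightarrow> 'n \<Rightarrow> 'n \<Rightarrow> 'k"
    and emb :: "'k \<Rightarrow> 'S::ring_1"
    and \<alpha> \<beta> \<gamma> \<delta> :: 'S
    and x dx :: "'n \<Rightarrow> 'S"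
  assumes "q \<noteq> 0"
    and "QYBE R"
    and "hecke q R"
    and "central_scalars emb"
    and "omega_rels emb q R x dx"
    and "gl11_rels emb q \<alpha> \<beta> \<gamma> \<delta>"
    and "graded_cross_rels \<alpha> \<beta> \<gamma> \<delta> x dx"
  shows "omega_rels emb q R (\<lambda>i. \<alpha> * x i + \<beta> * dx i) (\<lambda>i. \<gamma> * x i + \<delta> * dx i)"
proof -
  note q0 = assms(1) and h = assms(3) and cs = assms(4)
  have EF: "emb q * (emb (inverse q) * t) = t" for t
    using q0 by (simp add: emb_emb[OF cs] emb_one[OF cs])
  have FE: "emb (inverse q) * (emb q * t) = t" for t
    using q0 by (simp add: emb_emb[OF cs] emb_one[OF cs])
  have pa: "\<alpha> * (emb c * t) = emb c * (\<alpha> * t)" for c t by (rule emb_left[OF cs])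
  have pb: "\<beta> * (emb c * t) = emb c * (\<beta> * t)" for c t by (rule emb_left[OF cs])
  have pg: "\<gamma> * (emb c * t) = emb c * (\<gamma> * t)" for c t by (rule emb_left[OF cs])
  have pd: "\<delta> * (emb c * t) = emb c * (\<delta> * t)" for c t by (rule emb_left[OF cs])
  have px: "x u * (emb c * t) = emb c * (x u * t)" for u c t by (rule emb_left[OF cs])
  have pdx: "dx u * (emb c * t) = emb c * (dx u * t)" for u c t by (rule emb_left[OF cs])
  have embsq: "emb (q ^ 2) = emb q * emb q" by (simp add: power2_eq_square emb_mult[OF cs])
  have embisq: "emb (inverse (q ^ 2)) = emb (inverse q) * emb (inverse q)"
    by (simp add: power2_eq_square emb_mult[OF cs])
  have emb1sq: "emb (1 - q ^ 2) = 1 - emb q * emb q"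
    by (simp add: emb_diff[OF cs] emb_one[OF cs] embsq)
  from assms(6) have g: "\<beta> * \<alpha> = \<alpha> * \<beta>" "\<gamma> * \<alpha> = emb (q ^ 2) * (\<alpha> * \<gamma>)"
     "\<delta> * \<beta> = \<beta> * \<delta>" "\<delta> * \<gamma> = emb (inverse (q ^ 2)) * (\<gamma> * \<delta>)"
     "\<gamma> * \<beta> = - (emb (q ^ 2) * (\<beta> * \<gamma>))"
     "\<delta> * \<alpha> - \<alpha> * \<delta> = emb (1 - q ^ 2) * (\<beta> * \<gamma>)"
     "\<beta> * \<beta> = 0" "\<gamma> * \<gamma> = 0"
    unfolding gl11_rels_def by auto
  have ba: "\<beta> * (\<alpha> * t) = \<alpha> * (\<beta> * t)" for t by (simp add: g(1) flip: mult.assoc)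
  have ga: "\<gamma> * (\<alpha> * t) = emb q * (emb q * (\<alpha> * (\<gamma> * t)))" for t
    by (simp add: g(2) embsq flip: mult.assoc)
  have db: "\<delta> * (\<beta> * t) = \<beta> * (\<delta> * t)" for t by (simp add: g(3) flip: mult.assoc)
  have dg: "\<delta> * (\<gamma> * t) = emb (inverse q) * (emb (inverse q) * (\<gamma> * (\<delta> * t)))" for t
    by (simp add: g(4) embisq flip: mult.assoc)
  have gb: "\<gamma> * (\<beta> * t) = - (emb q * (emb q * (\<beta> * (\<gamma> * t))))" for t
    by (simp add: g(5) embsq flip: mult.assoc)
  have da0: "\<delta> * \<alpha> = \<alpha> * \<delta> + (1 - emb q * emb q) * (\<beta> * \<gamma>)"
    using g(6) by (simp add: emb1sq diff_eq_eq add.commute)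
  have da: "\<delta> * (\<alpha> * t) = \<alpha> * (\<delta> * t) + \<beta> * (\<gamma> * t) - emb q * (emb q * (\<beta> * (\<gamma> * t)))" for t
    by (simp add: da0 algebra_simps flip: mult.assoc)
  have bb: "\<beta> * (\<beta> * t) = 0" for t by (simp add: g(7) flip: mult.assoc)
  have gg: "\<gamma> * (\<gamma> * t) = 0" for t by (simp add: g(8) flip: mult.assoc)
  from assms(7) have c: "\<And>u. \<alpha> * x u = x u * \<alpha>" "\<And>u. \<alpha> * dx u = dx u * \<alpha>"
      "\<And>u. \<delta> * x u = x u * \<delta>" "\<And>u. \<delta> * dx u = dx u * \<delta>"
      "\<And>u. \<beta> * x u = x u * \<beta>" "\<And>u. \<gamma> * x u = x u * \<gamma>"
      "\<And>u. \<beta> * dx u = - (dx u * \<beta>)" "\<And>u. \<gamma> * dx u = - (dx u * \<gamma>)"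
    unfolding graded_cross_rels_def by auto
  have xa: "x u * (\<alpha> * t) = \<alpha> * (x u * t)" for u t by (simp add: c(1) flip: mult.assoc)
  have dxa: "dx u * (\<alpha> * t) = \<alpha> * (dx u * t)" for u t by (simp add: c(2) flip: mult.assoc)
  have xd: "x u * (\<delta> * t) = \<delta> * (x u * t)" for u t by (simp add: c(3) flip: mult.assoc)
  have dxd: "dx u * (\<delta> * t) = \<delta> * (dx u * t)" for u t by (simp add: c(4) flip: mult.assoc)
  have xb: "x u * (\<beta> * t) = \<beta> * (x u * t)" for u t by (simp add: c(5) flip: mult.assoc)
  have xg: "x u * (\<gamma> * t) = \<gamma> * (x u * t)" for u t by (simp add: c(6) flip: mult.assoc)
  have dxb: "dx u * (\<beta> * t) = - (\<beta> * (dx u * t))" for u t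
  proof -
    have "dx u * \<beta> = - (\<beta> * dx u)" using c(7)[of u] by simp
    then show ?thesis by (simp flip: mult.assoc)
  qed
  have dxg: "dx u * (\<gamma> * t) = - (\<gamma> * (dx u * t))" for u t
  proof -
    have "dx u * \<gamma> = - (\<gamma> * dx u)" using c(8)[of u] by simp
    then show ?thesis by (simp flip: mult.assoc)
  qed
  note rules = EF FE pa pb pg pd px pdx ba ga db dg gb da bb gg xa dxa xd dxd xb xg dxb dxg
  have o1: "x i * x j = emb (inverse q) * Sop emb R (\<lambda>u v. x u * x v) i j" for i j
  proof -
    have "x i * x j = (\<Sum>a\<in>UNIV. \<Sum>b\<in>UNIV. emb (inverse q * R a i b j) * (x b * x a))"
      using assms(5) unfolding omega_rels_def by blast
    also have "\<dots> = emb (inverse q) * Sop emb R (\<lambda>u v. x u * x v) i j" by (rule Sop_omega[OF cs])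
    finally show ?thesis .
  qed
  have o2: "dx i * x j = emb q * Sop emb R (\<lambda>u v. x u * dx v) i j" for i j
  proof -
    have "dx i * x j = (\<Sum>a\<in>UNIV. \<Sum>b\<in>UNIV. emb (q * R a i b j) * (x b * dx a))"
      using assms(5) unfolding omega_rels_def by blast
    also have "\<dots> = emb q * Sop emb R (\<lambda>u v. x u * dx v) i j" by (rule Sop_omega[OF cs])
    finally show ?thesis .
  qed
  have o3: "dx i * dx j = emb (- q) * Sop emb R (\<lambda>u v. dx u * dx v) i j" for i j
  proof -
    have "dx i * dx j = (\<Sum>a\<in>UNIV. \<Sum>b\<in>UNIV. emb (- q * R a i b j) * (dx b * dx a))"
      using assms(5) unfolding omega_rels_def by blast
    also have "\<dots> = emb (- q) * Sop emb R (\<lambda>u v. dx u * dx v) i j" by (rule Sop_omega[OF cs])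
    finally show ?thesis .
  qed
  have SXX: "Sop emb R (\<lambda>u v. x u * x v) i j = emb q * (x i * x j)" for i j
    using o1[of i j] by (simp add: EF)
  have SA: "Sop emb R (\<lambda>u v. x u * dx v) i j = emb (inverse q) * (dx i * x j)" for i j
    using o2[of i j] by (simp add: FE)
  have SD: "Sop emb R (\<lambda>u v. dx u * dx v) i j = - (emb (inverse q) * (dx i * dx j))" for i j
    using o3[of i j] by (simp add: FE emb_uminus[OF cs])
  have SB: "Sop emb R (\<lambda>u v. dx u * x v) i j = emb q * (dx i * x j) - emb (inverse q) * (dx i * x j)
     + emb q * (x i * dx j)" for i j
  proof -
    have "(\<lambda>u v. dx u * x v) = (\<lambda>u v. emb q * Sop emb R (\<lambda>u v. x u * dx v) u v)"
      using o2 by auto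
    then have "Sop emb R (\<lambda>u v. dx u * x v) i j = emb q * Sop emb R (Sop emb R (\<lambda>u v. x u * dx v)) i j"
      by (simp add: Sop_lmul[OF cs])
    also have "\<dots> = emb q * (emb (q - inverse q) * Sop emb R (\<lambda>u v. x u * dx v) i j + x i * dx j)"
      by (simp add: Sop_Sop[OF cs h q0])
    finally show ?thesis
      by (simp add: SA emb_diff[OF cs] algebra_simps EF)
  qed
  note Sops = Sop_add[OF cs] Sop_diff[OF cs] Sop_minus[OF cs] Sop_lmul[OF cs] SXX SA SB SD
  show ?thesis
    unfolding omega_rels_def
  proof (intro conjI allI)
    fix i j
    show "(\<alpha> * x i + \<beta> * dx i) * (\<alpha> * x j + \<beta> * dx j) =
      (\<Sum>a\<in>UNIV. \<Sum>b\<in>UNIV. emb (inverse q * R a i b j) * ((\<alpha> * x b + \<beta> * dx b) * (\<alpha> * x a + \<beta> * dx a)))"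
      apply (subst Sop_omega[OF cs])
      apply (simp add: algebra_simps rules Sops)
      done
  next
    fix i j
    show "(\<gamma> * x i + \<delta> * dx i) * (\<alpha> * x j + \<beta> * dx j) =
      (\<Sum>a\<in>UNIV. \<Sum>b\<in>UNIV. emb (q * R a i b j) * ((\<alpha> * x b + \<beta> * dx b) * (\<gamma> * x a + \<delta> * dx a)))"
      apply (subst Sop_omega[OF cs])
      apply (simp add: algebra_simps rules Sops)
      done
  next
    fix i j
    show "(\<gamma> * x i + \<delta> * dx i) * (\<gamma> * x j + \<delta> * dx j) =
      (\<Sum>a\<in>UNIV. \<Sum>b\<in>UNIV. emb (- q * R a i b j) * ((\<gamma> * x b + \<delta> * dx b) * (\<gamma> * x a + \<delta> * dx a)))"
      apply (subst Sop_omega[OF cs])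
      apply (simp add: algebra_simps rules Sops emb_uminus[OF cs])
      done
  qed
qed

end
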